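(* Let $G$ be a graph such that two or more edges join vertices $v$ and $w$. If $e$ is one of these edges, then $\mathrm{usp}(G\backslash e)\geq \mathrm{usp}(G)$ and $\mathrm{sp}(G\backslash e)\leq \mathrm{sp}(G)$. Moreover, if three or more edges join $v$ and $w$, then $\mathrm{usp}(G\backslash e)=\mathrm{usp}(G)$ and $\mathrm{sp}(G\backslash e)=\mathrm{sp}(G)$.
   Context: All graphs are finite, have at least one vertex, have no loops, and may have multiple (parallel) edges. $G\backslash e$ denotes deletion of edge $e$. A unique shortest path is a shortest $u$–$v$ path $P$ such that every $u$–$v$ path with the same number of vertices is identical to $P$, where two paths with different edge sequences are different even if their vertex sequences agree; a single vertex is a unique shortest path. The parade number $\mathrm{usp}(G)$ is the largest number of vertices of a unique shortest path in $G$. The spectator number is $\mathrm{sp}(G)=|V(G)|-\mathrm{usp}(G)$. *)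

theory Defs
  imports Main
begin

text \<open>A finite multigraph is given by a vertex set V, an edge set E, and an endpoint
map ends; each edge has exactly two distinct endpoints (no loops), parallel edges allowed.\<close>

definition multigraph :: "'v set \<Rightarrow> 'e set \<Rightarrow> ('e \<Rightarrow> 'v set) \<Rightarrow> bool" where
  "multigraph V E ends \<longleftrightarrow> finite V \<and> V \<noteq> {} \<and> finite E \<and>
     (\<forall>e\<in>E. ends e \<subseteq> V \<and> card (ends e) = 2)"

definition is_path :: "'v set \<Rightarrow> 'e set \<Rightarrow> ('e \<Rightarrow> 'v set) \<Rightarrow> 'v list \<Rightarrow> 'e list \<Rightarrow> bool" where
  "is_path V E ends vs es \<longleftrightarrow> vs \<noteq> [] \<and> distinct vs \<and> set vs \<subseteq> V \<and>
     length es + 1 = length vs \<and>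
     (\<forall>i<length es. es ! i \<in> E \<and> ends (es ! i) = {vs ! i, vs ! Suc i})"

definition is_usp :: "'v set \<Rightarrow> 'e set \<Rightarrow> ('e \<Rightarrow> 'v set) \<Rightarrow> 'v list \<Rightarrow> 'e list \<Rightarrow> bool" where
  "is_usp V E ends vs es \<longleftrightarrow> is_path V E ends vs es \<and>
     (\<forall>vs' es'. is_path V E ends vs' es' \<and> hd vs' = hd vs \<and> last vs' = last vs \<longrightarrow>
        length vs \<le> length vs' \<and> (length vs' = length vs \<longrightarrow> vs' = vs \<and> es' = es))"

definition usp :: "'v set \<Rightarrow> 'e set \<Rightarrow> ('e \<Rightarrow> 'v set) \<Rightarrow> nat" where
  "usp V E ends = Max {length vs | vs es. is_usp V E ends vs es}"

definition sp :: "'v set \<Rightarrow> 'e set \<Rightarrow> ('e \<Rightarrow> 'v set) \<Rightarrow> nat" where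
  "sp V E ends = card V - usp V E ends"

end

theory Submission
  imports Defs
begin

lemma two_elems:
  assumes "card A \<ge> 2"
  shows "\<exists>x\<in>A. \<exists>y\<in>A. x \<noteq> y"
proof (rule ccontr)
  assume "\<not> ?thesis"
  then have "\<forall>x\<in>A. \<forall>y\<in>A. x = y" by blast
  then have "card A \<le> 1"
    by (cases "finite A") (simp_all add: card_le_Suc0_iff_eq)
  with assms show False by simp
qed

lemma usp_avoid:
  assumes "is_usp V E ends vs es" "f1 \<in> E" "f2 \<in> E" "f1 \<noteq> f2"
    "ends f1 = {v, w}" "ends f2 = {v, w}" "i < length es"
  shows "ends (es ! i) \<noteq> {v, w}"
proof
  assume h: "ends (es ! i) = {v, w}"
  obtain g where g: "g \<in> E" "ends g = {v, w}" "g \<noteq> es ! i"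
  proof (cases "f1 = es ! i")
    case True then show ?thesis using that assms by blast
  next
    case False then show ?thesis using that assms by blast
  qed
  let ?es = "es[i := g]"
  have p: "is_path V E ends vs es" using assms(1) unfolding is_usp_def by blast
  have "is_path V E ends vs ?es"
    using p g h assms(7) unfolding is_path_def by (auto simp: nth_list_update)
  then have "?es = es" using assms(1) unfolding is_usp_def by blast
  then have "g = es ! i" using assms(7) by (metis nth_list_update_eq)
  with g show False by simp
qed

lemma usp_sub:
  assumes "is_usp V E ends vs es" "set es \<subseteq> E'" "E' \<subseteq> E"
  shows "is_usp V E' ends vs es"
proof -
  have "\<And>vs' es'. is_path V E' ends vs' es' \<Longrightarrow> is_path V E ends vs' es'"
    using assms(3) unfolding is_path_def by blast
  moreover have "is_path V E' ends vs es"
    using assms(1,2) unfolding is_usp_def is_path_def by (auto simp: set_conv_nth)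
  ultimately show ?thesis using assms(1) unfolding is_usp_def by blast
qed

lemma usp_sup:
  assumes "is_usp V E' ends vs es" "E' \<subseteq> E" "\<forall>x\<in>E - E'. ends x = {v, w}"
    "f \<in> E'" "ends f = {v, w}" "\<forall>i<length es. ends (es ! i) \<noteq> {v, w}"
  shows "is_usp V E ends vs es"
proof -
  have p: "is_path V E' ends vs es" using assms(1) unfolding is_usp_def by blast
  have pE: "is_path V E ends vs es" using p assms(2) unfolding is_path_def by blast
  have "length vs \<le> length vs' \<and> (length vs' = length vs \<longrightarrow> vs' = vs \<and> es' = es)"
    if q: "is_path V E ends vs' es'" "hd vs' = hd vs" "last vs' = last vs" for vs' es'
  proof -
    define es'' where "es'' = map (\<lambda>x. if x \<in> E' then x else f) es'"
    have q'': "is_path V E' ends vs' es''"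
    proof -
      have "es'' ! i \<in> E' \<and> ends (es'' ! i) = {vs' ! i, vs' ! Suc i}" if i: "i < length es'" for i
      proof -
        have h: "es' ! i \<in> E" "ends (es' ! i) = {vs' ! i, vs' ! Suc i}"
          using q(1) i unfolding is_path_def by auto
        show ?thesis
        proof (cases "es' ! i \<in> E'")
          case True then show ?thesis using h i unfolding es''_def by simp
        next
          case False
          then have "ends (es' ! i) = {v, w}" using h(1) assms(3) by blast
          then show ?thesis using False h i assms(4,5) unfolding es''_def by simp
        qed
      qed
      then show ?thesis using q(1) unfolding is_path_def es''_def by auto
    qed
    then have r: "length vs \<le> length vs' \<and> (length vs' = length vs \<longrightarrow> vs' = vs \<and> es'' = es)"
      using assms(1) q unfolding is_usp_def by blast
    moreover have "es' = es" if L: "length vs' = length vs"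
    proof -
      have e: "es'' = es" and vv: "vs' = vs" using r L by auto
      have len: "length es' = length es" using e unfolding es''_def by (metis length_map)
      show ?thesis
      proof (rule nth_equalityI[OF len])
        fix i assume i: "i < length es'"
        have m: "es'' ! i = (if es' ! i \<in> E' then es' ! i else f)"
          using i unfolding es''_def by simp
        show "es' ! i = es ! i"
        proof (cases "es' ! i \<in> E'")
          case True then show ?thesis using e m by simp
        next
          case False
          then have "es ! i = f" using e m by simp
          then show ?thesis using assms(5,6) i len by auto
        qed
      qed
    qed
    ultimately show ?thesis by blast
  qed
  then show ?thesis using pE unfolding is_usp_def by blast
qed

lemma S_fin:
  assumes "finite V"
  shows "finite {length vs | vs es. is_usp V E ends vs es}"
proof -
  have "{length vs | vs es. is_usp V E ends vs es} \<subseteq> {..card V}"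
  proof
    fix n assume "n \<in> {length vs | vs es. is_usp V E ends vs es}"
    then obtain vs es where "n = length vs" "is_usp V E ends vs es" by blast
    then have "distinct vs" "set vs \<subseteq> V" "n = length vs" unfolding is_usp_def is_path_def by auto
    then show "n \<in> {..card V}" using assms
      by (metis atMost_iff card_mono distinct_card)
  qed
  then show ?thesis using finite_subset by blast
qed

lemma S_ne:
  assumes "V \<noteq> {}"
  shows "{length vs | vs es. is_usp V E ends vs es} \<noteq> {}"
proof -
  obtain x where x: "x \<in> V" using assms by blast
  have "length vs' = 1 \<and> vs' = [x] \<and> es' = []"
    if q: "is_path V E ends vs' es'" "hd vs' = x" "last vs' = x" for vs' es'
  proof -
    have d: "distinct vs'" "vs' \<noteq> []" "length es' + 1 = length vs'" using q(1) unfolding is_path_def by auto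
    then obtain y ys where ys: "vs' = y # ys" by (cases vs') auto
    have "ys = []"
    proof (rule ccontr)
      assume "ys \<noteq> []"
      then have "last vs' \<in> set ys" using ys by simp
      then show False using d(1) ys q(2,3) by auto
    qed
    then show ?thesis using ys q(2) d(3) by simp
  qed
  then have "is_usp V E ends [x] []"
    unfolding is_usp_def is_path_def using x by auto
  then show ?thesis by blast
qed

theorem lemma6p8:
  fixes V :: "'v set" and E :: "'e set" and ends :: "'e \<Rightarrow> 'v set"
  assumes "multigraph V E ends"
    and "card {f \<in> E. ends f = {v, w}} \<ge> 2"
    and "e \<in> E" and "ends e = {v, w}"
  shows "usp V (E - {e}) ends \<ge> usp V E ends \<and> sp V (E - {e}) ends \<le> sp V E ends \<and>
    (card {f \<in> E. ends f = {v, w}} \<ge> 3 \<longrightarrow>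
       usp V (E - {e}) ends = usp V E ends \<and> sp V (E - {e}) ends = sp V E ends)"
proof -
  have fV: "finite V" "V \<noteq> {}" using assms(1) unfolding multigraph_def by auto
  let ?S = "\<lambda>E. {length vs | vs es. is_usp V E ends vs es}"
  obtain f1 f2 where f: "f1 \<in> E" "f2 \<in> E" "f1 \<noteq> f2" "ends f1 = {v,w}" "ends f2 = {v,w}"
    using two_elems[OF assms(2)] by blast
  have sub1: "?S E \<subseteq> ?S (E - {e})"
  proof
    fix n assume "n \<in> ?S E"
    then obtain vs es where n: "n = length vs" "is_usp V E ends vs es" by blast
    have "\<forall>i<length es. ends (es ! i) \<noteq> {v, w}"
      using usp_avoid[OF n(2) f] by blast
    then have "set es \<subseteq> E - {e}"
    proof (intro subsetI)
      fix x assume x: "x \<in> set es" and av: "\<forall>i<length es. ends (es ! i) \<noteq> {v, w}"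
      then obtain i where i: "i < length es" "x = es ! i" by (metis in_set_conv_nth)
      have "x \<in> E" using n(2) i unfolding is_usp_def is_path_def by blast
      moreover have "x \<noteq> e" using av i assms(4) by auto
      ultimately show "x \<in> E - {e}" by blast
    qed
    then have "is_usp V (E - {e}) ends vs es" using usp_sub[OF n(2)] by blast
    then show "n \<in> ?S (E - {e})" using n(1) by blast
  qed
  have le1: "usp V E ends \<le> usp V (E - {e}) ends"
    unfolding usp_def by (rule Max_mono[OF sub1 S_ne[OF fV(2)] S_fin[OF fV(1)]])
  have part3: "usp V (E - {e}) ends = usp V E ends"
    if c3: "card {f \<in> E. ends f = {v, w}} \<ge> 3"
  proof -
    have "{f \<in> E - {e}. ends f = {v, w}} = {f \<in> E. ends f = {v, w}} - {e}" by blast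
    moreover have "finite {f \<in> E. ends f = {v, w}}" using assms(1) unfolding multigraph_def by auto
    ultimately have "card {f \<in> E - {e}. ends f = {v, w}} \<ge> 2"
      using c3 assms(3,4) by (simp add: card_Diff_singleton)
    then obtain g1 g2 where g: "g1 \<in> E - {e}" "g2 \<in> E - {e}" "g1 \<noteq> g2"
      "ends g1 = {v,w}" "ends g2 = {v,w}"
      using two_elems by blast
    have sub2: "?S (E - {e}) \<subseteq> ?S E"
    proof
      fix n assume "n \<in> ?S (E - {e})"
      then obtain vs es where n: "n = length vs" "is_usp V (E - {e}) ends vs es" by blast
      have av: "\<forall>i<length es. ends (es ! i) \<noteq> {v, w}"
        using usp_avoid[OF n(2) g] by blast
      have "is_usp V E ends vs es"
        by (rule usp_sup[OF n(2) _ _ g(1) g(4) av]) (use assms(4) in auto)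
      then show "n \<in> ?S E" using n(1) by blast
    qed
    have "usp V (E - {e}) ends \<le> usp V E ends"
      unfolding usp_def by (rule Max_mono[OF sub2 S_ne[OF fV(2)] S_fin[OF fV(1)]])
    then show ?thesis using le1 by simp
  qed
  show ?thesis using le1 part3 unfolding sp_def by (auto simp: diff_le_mono2)
qed

end
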